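(* For every positive integer $n$, the number of modified balanced partitions of size $n$ equals the Catalan number $C_n=\frac{1}{n+1}\binom{2n}{n}$. More precisely, the map sending $(\,\mid\,)\mapsto N^nE^n$ and a nonempty $(a_1,\ldots,a_l\mid b_1,\ldots,b_l)$ to the word \[ N^{b_l}E^{a_l+1}N^{b_{l-1}-b_l}E^{a_{l-1}-a_l}\cdots N^{b_1-b_2}E^{a_1-a_2}N^{n-b_1}E^{n-a_1-1} \] is a bijection from modified balanced partitions of size $n$ to Dyck paths of length $2n$ (lattice paths from $(0,0)$ to $(n,n)$ with unit north steps $N$ and east steps $E$ never going below the diagonal $y=x$).
   Context: For a partition $\lambda$ with conjugate $\lambda'$ and Durfee square side $l=\max\{i:\lambda_i\ge i\}$, its Frobenius notation is $(\lambda_1-1,\ldots,\lambda_l-l\mid \lambda'_1-1,\ldots,\lambda'_l-l)$; the empty partition is $(\,\mid\,)$. A modified balanced partition of size $n$ is a partition $\lambda=(\lambda_1,\ldots,\lambda_n)$ with $n$ parts, zero parts allowed, such that $\lambda_1\le n-1$ and $\lambda_i<\lambda'_i$ whenever $\lambda_i\ge i$ (equivalently, in Frobenius notation, $a_i<b_i$ for all $i$). *)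

theory Defs
  imports Complex_Main
begin

text \<open>A partition with n parts (zero parts allowed) is a weakly decreasing list
  of naturals of length n; part i (1-indexed) is lam ! (i-1), and 0 beyond.\<close>

datatype step = N | E

definition part :: "nat list \<Rightarrow> nat \<Rightarrow> nat" where
  "part lam i = (if 1 \<le> i \<and> i \<le> length lam then lam ! (i - 1) else 0)"

definition conjpart :: "nat list \<Rightarrow> nat \<Rightarrow> nat" where
  "conjpart lam i = card {j. 1 \<le> j \<and> j \<le> length lam \<and> i \<le> part lam j}"

definition durfee :: "nat list \<Rightarrow> nat" where
  "durfee lam = Max ({0} \<union> {i. 1 \<le> i \<and> i \<le> length lam \<and> i \<le> part lam i})"

definition frob_a :: "nat list \<Rightarrow> nat \<Rightarrow> nat" where
  "frob_a lam i = part lam i - i"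

definition frob_b :: "nat list \<Rightarrow> nat \<Rightarrow> nat" where
  "frob_b lam i = conjpart lam i - i"

definition is_partition :: "nat list \<Rightarrow> bool" where
  "is_partition lam \<longleftrightarrow> sorted_wrt (\<ge>) lam"

definition modified_balanced :: "nat \<Rightarrow> nat list \<Rightarrow> bool" where
  "modified_balanced n lam \<longleftrightarrow>
     is_partition lam \<and> length lam = n \<and> part lam 1 \<le> n - 1 \<and>
     (\<forall>i. 1 \<le> i \<and> i \<le> n \<and> i \<le> part lam i \<longrightarrow> part lam i < conjpart lam i)"

definition count_step :: "step \<Rightarrow> step list \<Rightarrow> nat" where
  "count_step s w = length (filter (\<lambda>x. x = s) w)"

definition dyck_path :: "nat \<Rightarrow> step list \<Rightarrow> bool" where
  "dyck_path n w \<longleftrightarrow> length w = 2 * n \<and> count_step N w = n \<and> count_step E w = n \<and>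
     (\<forall>k \<le> length w. count_step E (take k w) \<le> count_step N (take k w))"

definition mbp_word :: "nat \<Rightarrow> nat list \<Rightarrow> step list" where
  "mbp_word n lam =
    (let l = durfee lam; a = frob_a lam; b = frob_b lam in
     if l = 0 then replicate n N @ replicate n E
     else replicate (b l) N @ replicate (a l + 1) E
          @ concat (map (\<lambda>i. replicate (b i - b (i + 1)) N @ replicate (a i - a (i + 1)) E)
                        (rev [1..<l]))
          @ replicate (n - b 1) N @ replicate (n - a 1 - 1) E)"

end

theory Submission
  imports Defs
begin

lemma count_step_Nil[simp]: "count_step s [] = 0"
  by (simp add: count_step_def)
lemma count_step_Cons[simp]: "count_step s (x#w) = (if x = s then Suc (count_step s w) else count_step s w)"
  by (simp add: count_step_def)
lemma count_step_append[simp]: "count_step s (u @ v) = count_step s u + count_step s v"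
  by (simp add: count_step_def)
lemma count_step_replicate[simp]: "count_step s (replicate k t) = (if s = t then k else 0)"
  by (induct k) auto

lemma length_counts: "length w = count_step N w + count_step E w"
proof (induct w)
  case (Cons x w) then show ?case by (cases x) auto
qed simp

fun valid :: "nat \<Rightarrow> step list \<Rightarrow> bool" where
  "valid h [] = True"
| "valid h (N#w) = valid (Suc h) w"
| "valid h (E#w) = (0 < h \<and> valid (h-1) w)"

lemma valid_repN: "valid h (replicate p N @ w) = valid (h+p) w"
  by (induct p arbitrary: h) auto
lemma valid_repE: "valid h (replicate q E @ w) = (q \<le> h \<and> valid (h-q) w)"
proof (induct q arbitrary: h)
  case (Suc q) then show ?case by (cases h) simp_all
qed simp

lemma all_le_Suc: "(\<forall>k\<le>Suc m. P k) \<longleftrightarrow> P 0 \<and> (\<forall>k\<le>m. P (Suc k))"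
proof
  assume "\<forall>k\<le>Suc m. P k" then show "P 0 \<and> (\<forall>k\<le>m. P (Suc k))" by auto
next
  assume a: "P 0 \<and> (\<forall>k\<le>m. P (Suc k))"
  show "\<forall>k\<le>Suc m. P k"
  proof (intro allI impI)
    fix k assume "k \<le> Suc m" then show "P k" using a by (cases k) auto
  qed
qed

lemma valid_iff: "valid h w \<longleftrightarrow> (\<forall>k\<le>length w. count_step E (take k w) \<le> h + count_step N (take k w))"
proof (induct w arbitrary: h)
  case Nil then show ?case by simp
next
  case (Cons x w)
  have sp: "(\<forall>k\<le>length (x#w). count_step E (take k (x#w)) \<le> h + count_step N (take k (x#w))) \<longleftrightarrow>
     (\<forall>k\<le>length w. count_step E (x # take k w) \<le> h + count_step N (x # take k w))"
    unfolding length_Cons all_le_Suc by simp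
  show ?case
  proof (cases x)
    case N
    have "(\<forall>k\<le>length w. count_step E (x # take k w) \<le> h + count_step N (x # take k w)) \<longleftrightarrow>
          (\<forall>k\<le>length w. count_step E (take k w) \<le> Suc h + count_step N (take k w))"
      using N by simp
    then show ?thesis unfolding sp using Cons[of "Suc h"] N by simp
  next
    case E
    show ?thesis
    proof (cases h)
      case 0
      have "\<not> (count_step E (x # take 0 w) \<le> h + count_step N (x # take 0 w))" using E 0 by simp
      then have "\<not> (\<forall>k\<le>length w. count_step E (x # take k w) \<le> h + count_step N (x # take k w))"
        by blast
      then show ?thesis unfolding sp using E 0 by simp
    next
      case (Suc h')
      have "(\<forall>k\<le>length w. count_step E (x # take k w) \<le> h + count_step N (x # take k w)) \<longleftrightarrow>
          (\<forall>k\<le>length w. count_step E (take k w) \<le> h' + count_step N (take k w))"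
        using E Suc by simp
      then show ?thesis unfolding sp using E Suc Cons[of h'] by simp
    qed
  qed
qed

lemma dyck_iff: "dyck_path n w \<longleftrightarrow> count_step N w = n \<and> count_step E w = n \<and> valid 0 w"
  unfolding dyck_path_def valid_iff using length_counts[of w] by auto

fun pword :: "nat \<times> nat \<Rightarrow> (nat \<times> nat) list \<Rightarrow> step list" where
  "pword p [] = []"
| "pword p (v#r) = replicate (fst v - fst p) N @ replicate (snd v - snd p) E @ pword v r"

fun mchain :: "nat \<times> nat \<Rightarrow> (nat \<times> nat) list \<Rightarrow> bool" where
  "mchain p [] = True"
| "mchain p (v#r) = (fst p \<le> fst v \<and> snd p \<le> snd v \<and> mchain v r)"

fun chain :: "nat \<times> nat \<Rightarrow> (nat \<times> nat) list \<Rightarrow> bool" where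
  "chain p [] = True"
| "chain p (v#r) = (fst p < fst v \<and> snd p < snd v \<and> chain v r)"

fun goodc :: "nat \<times> nat \<Rightarrow> (nat \<times> nat) list \<Rightarrow> bool" where
  "goodc p [] = True"
| "goodc p (v#r) = (fst p < fst v \<and> snd p \<le> snd v \<and> (r \<noteq> [] \<longrightarrow> snd p < snd v) \<and> goodc v r)"

lemma chain_mchain: "chain p ps \<Longrightarrow> mchain p ps"
  by (induct ps arbitrary: p) auto
lemma goodc_mchain: "goodc p ps \<Longrightarrow> mchain p ps"
  by (induct ps arbitrary: p) auto

lemma chain_append1: "chain p (vs @ [u]) \<longleftrightarrow> chain p vs \<and> fst (last (p#vs)) < fst u \<and> snd (last (p#vs)) < snd u"
  by (induct vs arbitrary: p) auto

lemma goodc_append1: "goodc p (vs @ [u]) \<Longrightarrow> chain p vs \<and> fst (last (p#vs)) < fst u"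
proof (induct vs arbitrary: p)
  case Nil then show ?case by simp
next
  case (Cons v vs) then show ?case using Cons.hyps[of v] by simp
qed

lemma mchain_last_ge: "mchain p ps \<Longrightarrow> fst p \<le> fst (last (p#ps)) \<and> snd p \<le> snd (last (p#ps))"
proof (induct ps arbitrary: p)
  case (Cons u ps)
  have m: "mchain u ps" "fst p \<le> fst u" "snd p \<le> snd u" using Cons.prems by auto
  have h: "fst u \<le> fst (last (u#ps)) \<and> snd u \<le> snd (last (u#ps))" using Cons.hyps[OF m(1)] .
  have l: "last (p#u#ps) = last (u#ps)" by simp
  show ?case unfolding l using h m by linarith
qed simp

lemma mchain_le_last: "mchain p ps \<Longrightarrow> v \<in> set ps \<Longrightarrow> fst v \<le> fst (last (p#ps)) \<and> snd v \<le> snd (last (p#ps))"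
proof (induct ps arbitrary: p)
  case (Cons u ps)
  have m: "mchain u ps" "fst p \<le> fst u" "snd p \<le> snd u" using Cons.prems by auto
  have l: "last (p#u#ps) = last (u#ps)" by simp
  have g: "fst u \<le> fst (last (u#ps)) \<and> snd u \<le> snd (last (u#ps))" using mchain_last_ge[OF m(1)] .
  show ?case
  proof (cases "v = u")
    case True then show ?thesis unfolding l using g by simp
  next
    case False then have "v \<in> set ps" using Cons.prems by simp
    then show ?thesis unfolding l using Cons.hyps[OF m(1)] by simp
  qed
qed simp

lemma count_pword:
  "mchain p ps \<Longrightarrow> count_step N (pword p ps) = fst (last (p#ps)) - fst p \<and>
                   count_step E (pword p ps) = snd (last (p#ps)) - snd p"
proof (induct ps arbitrary: p)
  case Nil then show ?case by simp
next
  case (Cons v ps)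
  have m: "mchain v ps" "fst p \<le> fst v" "snd p \<le> snd v" using Cons.prems by auto
  have ih: "count_step N (pword v ps) = fst (last (v#ps)) - fst v \<and>
                   count_step E (pword v ps) = snd (last (v#ps)) - snd v" using Cons.hyps[OF m(1)] .
  have ge: "fst v \<le> fst (last (v#ps)) \<and> snd v \<le> snd (last (v#ps))" using mchain_last_ge[OF m(1)] .
  have l: "last (p#v#ps) = last (v#ps)" by simp
  have "count_step N (pword p (v#ps)) = (fst v - fst p) + count_step N (pword v ps)"
       "count_step E (pword p (v#ps)) = (snd v - snd p) + count_step E (pword v ps)" by simp_all
  then show ?case unfolding l using ih ge m by linarith
qed

lemma valid_pword:
  "mchain p ps \<Longrightarrow> snd p \<le> fst p \<Longrightarrow>
    valid (fst p - snd p) (pword p ps) \<longleftrightarrow> (\<forall>v\<in>set ps. snd v \<le> fst v)"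
proof (induct ps arbitrary: p)
  case Nil then show ?case by simp
next
  case (Cons v ps)
  have m: "mchain v ps" "fst p \<le> fst v" "snd p \<le> snd v" using Cons.prems by auto
  have sp: "snd p \<le> fst p" using Cons.prems by auto
  have "valid (fst p - snd p) (pword p (v#ps)) =
        valid (fst p - snd p) (replicate (fst v - fst p) N @ replicate (snd v - snd p) E @ pword v ps)"
    by simp
  also have "\<dots> = valid (fst p - snd p + (fst v - fst p)) (replicate (snd v - snd p) E @ pword v ps)"
    by (rule valid_repN)
  also have "\<dots> = (snd v - snd p \<le> fst p - snd p + (fst v - fst p) \<and>
      valid (fst p - snd p + (fst v - fst p) - (snd v - snd p)) (pword v ps))"
    by (rule valid_repE)
  finally have V: "valid (fst p - snd p) (pword p (v#ps)) = (snd v - snd p \<le> fst p - snd p + (fst v - fst p) \<and>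
      valid (fst p - snd p + (fst v - fst p) - (snd v - snd p)) (pword v ps))" .
  show ?case
  proof (cases "snd v \<le> fst v")
    case True
    have e2: "fst p - snd p + (fst v - fst p) - (snd v - snd p) = fst v - snd v" using m sp True by linarith
    have c: "snd v - snd p \<le> fst p - snd p + (fst v - fst p)" using m sp True by linarith
    show ?thesis unfolding V e2 using Cons.hyps[OF m(1) True] c True by simp
  next
    case False
    have c: "\<not> snd v - snd p \<le> fst p - snd p + (fst v - fst p)" using m sp False by linarith
    show ?thesis unfolding V using c False by simp
  qed
qed

definition blk :: "step list \<Rightarrow> nat \<times> nat \<times> step list" where
  "blk w = (length (takeWhile (\<lambda>x. x = N) w),
            length (takeWhile (\<lambda>x. x = E) (dropWhile (\<lambda>x. x = N) w)),
            dropWhile (\<lambda>x. x = E) (dropWhile (\<lambda>x. x = N) w))"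

lemma blk_len: "length (snd (snd (blk (s#w)))) < Suc (length w)"
proof (cases s)
  case N
  have "length (dropWhile (\<lambda>x. x = E) (dropWhile (\<lambda>x. x = N) w)) \<le> length (dropWhile (\<lambda>x. x = N) w)"
    by (rule length_dropWhile_le)
  also have "\<dots> \<le> length w" by (rule length_dropWhile_le)
  finally show ?thesis using N by (simp add: blk_def)
next
  case E
  have "length (dropWhile (\<lambda>x. x = E) w) \<le> length w" by (rule length_dropWhile_le)
  then show ?thesis using E by (simp add: blk_def)
qed

function dec :: "nat \<times> nat \<Rightarrow> step list \<Rightarrow> (nat \<times> nat) list" where
  "dec p [] = []"
| "dec p (s#w) = (fst p + fst (blk (s#w)), snd p + fst (snd (blk (s#w))))
       # dec (fst p + fst (blk (s#w)), snd p + fst (snd (blk (s#w)))) (snd (snd (blk (s#w))))"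
  by pat_completeness auto
termination
  by (relation "measure (\<lambda>(p,w). length w)") (auto simp: blk_len)

lemma takeWhile_rep: "replicate (length (takeWhile (\<lambda>x. x = c) w)) c = takeWhile (\<lambda>x. x = c) w"
  by (rule replicate_length_same) (auto dest: set_takeWhileD)

lemma pword_dec: "pword p (dec p w) = w"
proof (induct p w rule: dec.induct)
  case (1 p) then show ?case by simp
next
  case (2 p s w)
  show ?case using 2 by (simp add: blk_def takeWhile_rep)
qed

lemma mchain_dec: "mchain p (dec p w)"
  by (induct p w rule: dec.induct) auto

lemma dec_nonempty: "w \<noteq> [] \<Longrightarrow> dec p w \<noteq> []"
  by (cases w) auto

lemma goodc_dec: "w = [] \<or> hd w = N \<Longrightarrow> goodc p (dec p w)"
proof (induct p w rule: dec.induct)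
  case (1 p) then show ?case by simp
next
  case (2 p s w)
  let ?w1 = "dropWhile (\<lambda>x. x = N) (s#w)"
  let ?w2 = "dropWhile (\<lambda>x. x = E) ?w1"
  have sN: "s = N" using 2(2) by simp
  have h2: "?w2 = [] \<or> hd ?w2 = N"
  proof (cases ?w2)
    case Nil then show ?thesis by simp
  next
    case (Cons y ys)
    then have "y \<noteq> E" using hd_dropWhile[of "\<lambda>x. x = E" ?w1] by auto
    then show ?thesis using Cons by (cases y) auto
  qed
  have m: "?w2 \<noteq> [] \<Longrightarrow> 0 < length (takeWhile (\<lambda>x. x = E) ?w1)"
  proof -
    assume ne: "?w2 \<noteq> []"
    then have "?w1 \<noteq> []" by (metis dropWhile.simps(1))
    then obtain y ys where y: "?w1 = y # ys" by (cases ?w1) auto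
    have "y \<noteq> N" using hd_dropWhile[of "\<lambda>x. x = N" "s#w"] y by auto
    then have "y = E" by (cases y) auto
    then show ?thesis using y by simp
  qed
  have w2: "snd (snd (blk (s#w))) = ?w2" and mm: "fst (snd (blk (s#w))) = length (takeWhile (\<lambda>x. x = E) ?w1)"
    and kk: "fst (blk (s#w)) = length (takeWhile (\<lambda>x. x = N) (s#w))" by (simp_all add: blk_def)
  have K: "0 < fst (blk (s#w))" unfolding kk using sN by simp
  define q where "q = (fst p + fst (blk (s#w)), snd p + fst (snd (blk (s#w))))"
  have ih: "goodc q (dec q (snd (snd (blk (s#w)))))" using 2(1)[OF h2[folded w2]] unfolding q_def .
  have rne: "dec q (snd (snd (blk (s#w)))) \<noteq> [] \<Longrightarrow> 0 < fst (snd (blk (s#w)))"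
    using m unfolding w2 mm by (metis dec.simps(1))
  have "dec p (s#w) = q # dec q (snd (snd (blk (s#w))))" by (simp add: q_def)
  then show ?case using ih rne K by (simp add: q_def)
qed

lemma tw_rep: "d \<noteq> c \<Longrightarrow> takeWhile (\<lambda>x. x = c) (replicate a c @ d # R) = replicate a c"
  by (induct a) auto
lemma dw_rep: "d \<noteq> c \<Longrightarrow> dropWhile (\<lambda>x. x = c) (replicate a c @ d # R) = d # R"
  by (induct a) auto

lemma dec_pword: "chain p vs \<Longrightarrow> dec p (pword p vs) = vs"
proof (induct vs arbitrary: p)
  case Nil then show ?case by simp
next
  case (Cons v r)
  have c: "chain v r" and lt: "fst p < fst v" "snd p < snd v" using Cons(2) by auto
  have hdN: "pword v r = [] \<or> (\<exists>R. pword v r = N # R)"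
  proof (cases r)
    case Nil then show ?thesis by simp
  next
    case (Cons u r')
    then have "fst v < fst u" using c by simp
    then obtain d where "fst u - fst v = Suc d" by (metis Suc_diff_Suc)
    then show ?thesis using Cons by auto
  qed
  obtain a where a: "fst v - fst p = Suc a" using lt by (metis Suc_diff_Suc)
  obtain b where b: "snd v - snd p = Suc b" using lt by (metis Suc_diff_Suc)
  define R where "R = pword v r"
  have tw: "takeWhile (\<lambda>x. x = E) (replicate b E @ R) = replicate b E"
       "dropWhile (\<lambda>x. x = E) (replicate b E @ R) = R"
    using hdN unfolding R_def[symmetric] by (induct b) auto
  have "dec p (pword p (v#r)) = dec p (N # replicate a N @ E # replicate b E @ R)"
    by (simp add: a b R_def)
  also have "\<dots> = v # dec v R"
  proof -
    have "dec p (N # replicate a N @ E # replicate b E @ R) =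
      (fst p + Suc a, snd p + Suc b) # dec (fst p + Suc a, snd p + Suc b) R"
      by (simp add: blk_def tw_rep dw_rep tw del: replicate.simps)
    also have "(fst p + Suc a, snd p + Suc b) = v"
    proof -
      have "fst v = fst p + Suc a" "snd v = snd p + Suc b" using a b lt by linarith+
      then show ?thesis by (simp add: prod_eq_iff)
    qed
    finally show ?thesis .
  qed
  also have "dec v R = r" using Cons(1)[OF c] R_def by simp
  finally show ?case .
qed

definition VL :: "nat \<Rightarrow> (nat \<times> nat) list set" where
  "VL n = {vs. chain (0,0) vs \<and> (\<forall>v\<in>set vs. snd v \<le> fst v \<and> fst v < n)}"

definition Wd :: "nat \<Rightarrow> (nat \<times> nat) list \<Rightarrow> step list" where
  "Wd n vs = pword (0,0) (vs @ [(n,n)])"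

lemma bij_Wd:
  assumes "n \<ge> 1"
  shows "bij_betw (Wd n) (VL n) {w. dyck_path n w}"
proof (rule bij_betw_imageI)
  have chainW: "chain (0,0) (vs @ [(n,n)])" if "vs \<in> VL n" for vs
  proof -
    have c: "chain (0,0) vs" and a: "\<forall>v\<in>set vs. snd v \<le> fst v \<and> fst v < n" using that by (auto simp: VL_def)
    have "fst (last ((0,0)#vs)) < n \<and> snd (last ((0,0)#vs)) < n"
    proof (cases "vs = []")
      case True then show ?thesis using assms by simp
    next
      case False then have "last vs \<in> set vs" by simp
      then have "snd (last vs) \<le> fst (last vs) \<and> fst (last vs) < n" using a by blast
      then show ?thesis using False by simp
    qed
    then show ?thesis using c by (simp add: chain_append1)
  qed
  show "inj_on (Wd n) (VL n)"
  proof (rule inj_onI)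
    fix x y assume x: "x \<in> VL n" and y: "y \<in> VL n" and e: "Wd n x = Wd n y"
    have "x @ [(n,n)] = dec (0,0) (Wd n x)" using dec_pword[OF chainW[OF x]] unfolding Wd_def by simp
    moreover have "y @ [(n,n)] = dec (0,0) (Wd n y)" using dec_pword[OF chainW[OF y]] unfolding Wd_def by simp
    ultimately have "x @ [(n,n)] = y @ [(n,n)]" using e by simp
    then show "x = y" by simp
  qed
  show "Wd n ` VL n = {w. dyck_path n w}"
  proof
    show "Wd n ` VL n \<subseteq> {w. dyck_path n w}"
    proof
      fix w assume "w \<in> Wd n ` VL n"
      then obtain vs where vs: "vs \<in> VL n" and w: "w = Wd n vs" by auto
      have m: "mchain (0,0) (vs @ [(n,n)])" using chain_mchain[OF chainW[OF vs]] .
      have "valid 0 w" using valid_pword[OF m] vs w by (auto simp: Wd_def VL_def)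
      moreover have "count_step N w = n" "count_step E w = n"
        using count_pword[OF m] w by (auto simp: Wd_def)
      ultimately show "w \<in> {w. dyck_path n w}" by (simp add: dyck_iff)
    qed
  next
    show "{w. dyck_path n w} \<subseteq> Wd n ` VL n"
    proof
      fix w assume "w \<in> {w. dyck_path n w}"
      then have cN: "count_step N w = n" and cE: "count_step E w = n" and v: "valid 0 w"
        by (auto simp: dyck_iff)
      have wne: "w \<noteq> []" using cN assms by auto
      have hd: "hd w = N"
      proof -
        obtain x w' where xw: "w = x # w'" using wne by (cases w) auto
        show ?thesis
        proof (cases x)
          case N then show ?thesis using xw by simp
        next
          case E then show ?thesis using xw v by simp
        qed
      qed
      define ps where "ps = dec (0,0) w"
      have g: "goodc (0,0) ps" using goodc_dec hd unfolding ps_def by blast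
      have m: "mchain (0,0) ps" using mchain_dec unfolding ps_def by blast
      have pw: "pword (0,0) ps = w" using pword_dec unfolding ps_def by blast
      have pne: "ps \<noteq> []" using dec_nonempty[OF wne] ps_def by simp
      have cc: "fst (last ((0,0)#ps)) = n" "snd (last ((0,0)#ps)) = n"
        using count_pword[OF m] pw cN cE by auto
      have "last ps = (n,n)" using cc pne by (simp add: prod_eq_iff)
      then have psd: "ps = butlast ps @ [(n,n)]" using pne by (metis append_butlast_last_id)
      define vs where "vs = butlast ps"
      have g1: "goodc (0,0) (vs @ [(n,n)])" using g psd vs_def by simp
      have g2: "chain (0,0) vs" "fst (last ((0,0)#vs)) < n"
        using goodc_append1[OF g1] by auto
      have allp: "\<forall>v\<in>set ps. snd v \<le> fst v" using valid_pword[OF m] pw v by simp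
      have sub: "set vs \<subseteq> set ps" unfolding vs_def by (meson in_set_butlastD subsetI)
      have "\<forall>v\<in>set vs. snd v \<le> fst v \<and> fst v < n"
      proof
        fix v assume vin: "v \<in> set vs"
        have "fst v \<le> fst (last ((0,0)#vs))" using mchain_le_last[OF chain_mchain[OF g2(1)] vin] by simp
        then show "snd v \<le> fst v \<and> fst v < n" using g2(2) allp sub vin by auto
      qed
      then have "vs \<in> VL n" using g2 by (simp add: VL_def)
      moreover have "Wd n vs = w" using psd pw vs_def by (simp add: Wd_def)
      ultimately show "w \<in> Wd n ` VL n" by blast
    qed
  qed
qed


definition S :: "nat \<Rightarrow> nat \<Rightarrow> nat \<Rightarrow> step list set" where
  "S h a b = {w. count_step N w = a \<and> count_step E w = b \<and> valid h w}"

lemma UNIV_step: "(UNIV :: step set) = {N, E}"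
  using step.exhaust by auto

lemma finite_S: "finite (S h a b)"
proof -
  have "S h a b \<subseteq> {w. set w \<subseteq> UNIV \<and> length w = a + b}"
    unfolding S_def using length_counts by auto
  moreover have "finite {w. set w \<subseteq> (UNIV::step set) \<and> length w = a + b}"
    by (rule finite_lists_length_eq) (simp add: UNIV_step)
  ultimately show ?thesis by (rule finite_subset)
qed

lemma S_00: "S h 0 0 = {[]}"
proof
  show "S h 0 0 \<subseteq> {[]}"
  proof
    fix w assume "w \<in> S h 0 0"
    then have "length w = 0" using length_counts[of w] unfolding S_def by simp
    then show "w \<in> {[]}" by simp
  qed
qed (simp add: S_def)

lemma S_split:
  assumes "a + b = Suc m"
  shows "S h a b = (if 0 < a then (#) N ` S (Suc h) (a-1) b else {}) \<union>
                   (if 0 < h \<and> 0 < b then (#) E ` S (h-1) a (b-1) else {})"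
proof
  show "S h a b \<subseteq> (if 0 < a then (#) N ` S (Suc h) (a-1) b else {}) \<union>
                   (if 0 < h \<and> 0 < b then (#) E ` S (h-1) a (b-1) else {})"
  proof
    fix w assume w: "w \<in> S h a b"
    then have "w \<noteq> []" using assms length_counts[of w] unfolding S_def by auto
    then obtain x w' where xw: "w = x # w'" by (cases w) auto
    show "w \<in> (if 0 < a then (#) N ` S (Suc h) (a-1) b else {}) \<union>
                   (if 0 < h \<and> 0 < b then (#) E ` S (h-1) a (b-1) else {})"
    proof (cases x)
      case N
      then have "w' \<in> S (Suc h) (a-1) b" "0 < a" using w xw unfolding S_def by auto
      then show ?thesis using xw N by auto
    next
      case E
      then have "w' \<in> S (h-1) a (b-1)" "0 < b" "0 < h" using w xw unfolding S_def by auto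
      then show ?thesis using xw E by auto
    qed
  qed
next
  show "(if 0 < a then (#) N ` S (Suc h) (a-1) b else {}) \<union>
                   (if 0 < h \<and> 0 < b then (#) E ` S (h-1) a (b-1) else {}) \<subseteq> S h a b"
    unfolding S_def by auto
qed

lemma card_S_split:
  assumes "a + b = Suc m"
  shows "card (S h a b) = (if 0 < a then card (S (Suc h) (a-1) b) else 0) +
                          (if 0 < h \<and> 0 < b then card (S (h-1) a (b-1)) else 0)"
proof -
  have d: "((if 0 < a then (#) N ` S (Suc h) (a-1) b else {}) \<inter>
                   (if 0 < h \<and> 0 < b then (#) E ` S (h-1) a (b-1) else {})) = {}" by auto
  have "card (S h a b) = card (if 0 < a then (#) N ` S (Suc h) (a-1) b else {}) +
          card (if 0 < h \<and> 0 < b then (#) E ` S (h-1) a (b-1) else {})"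
    unfolding S_split[OF assms] by (rule card_Un_disjoint) (auto simp: finite_S d)
  then show ?thesis by (simp add: card_image)
qed

lemma count_S: "b \<le> a + h + 1 \<Longrightarrow> card (S h a b) + ((a + b) choose (a + h + 1)) = (a + b) choose a"
proof (induct "a + b" arbitrary: h a b)
  case 0 then show ?case by (simp add: S_00)
next
  case (Suc m)
  note cs = card_S_split[OF Suc(2)[symmetric], of h]
  show ?case
  proof (cases a)
    case 0
    then have b: "b = Suc m" using Suc by simp
    show ?thesis
    proof (cases h)
      case 0 then show ?thesis using Suc(3) b \<open>a = 0\<close> cs by simp
    next
      case (Suc h')
      have ih: "card (S h' 0 m) + (m choose (h' + 1)) = 1" using Suc.hyps(1)[of 0 m h'] Suc.prems b \<open>a=0\<close> \<open>h = Suc h'\<close> by simp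
      have z: "m choose Suc (Suc h') = 0" using Suc.prems b \<open>a=0\<close> \<open>h = Suc h'\<close> by simp
      show ?thesis using cs ih z b \<open>a=0\<close> \<open>h = Suc h'\<close> Suc.prems by (simp add: binomial_eq_0)
    qed
  next
    case (Suc a')
    have ihN: "card (S (Suc h) a' b) + (m choose (a' + Suc h + 1)) = m choose a'"
      using Suc.hyps(1)[of a' b "Suc h"] Suc.hyps(2) Suc.prems \<open>a = Suc a'\<close> by simp
    show ?thesis
    proof (cases "0 < h \<and> 0 < b")
      case True
      obtain b' where b': "b = Suc b'" using True by (cases b) auto
      have ihE: "card (S (h-1) a b') + (m choose (a + (h - 1) + 1)) = m choose a"
        using Suc.hyps(1)[of a b' "h-1"] Suc.hyps(2) Suc.prems b' True by simp
      have e1: "a + (h - 1) + 1 = Suc (a' + h)" using True \<open>a = Suc a'\<close> by simp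
      have e2: "a' + Suc h + 1 = Suc (Suc (a' + h))" by simp
      have m: "a + b = Suc m" using Suc.hyps(2) by simp
      show ?thesis using cs ihN ihE True b' \<open>a = Suc a'\<close> m unfolding e1 e2 by simp
    next
      case False
      have m: "a + b = Suc m" using Suc.hyps(2) by simp
      have z: "(m choose Suc (a' + h)) = (m choose Suc a')"
      proof (cases "h = 0")
        case True then show ?thesis by simp
      next
        case False
        then have "b = 0" using \<open>\<not> (0 < h \<and> 0 < b)\<close> by simp
        then have "m = a'" using m \<open>a = Suc a'\<close> by simp
        then show ?thesis using False by (simp add: binomial_eq_0)
      qed
      show ?thesis using cs ihN False \<open>a = Suc a'\<close> m z by simp
    qed
  qed
qed

lemma card_dyck: "real (card {w. dyck_path n w}) = real ((2 * n) choose n) / real (n + 1)"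
proof -
  have eq: "{w. dyck_path n w} = S 0 n n" unfolding S_def by (auto simp: dyck_iff)
  have c: "card (S 0 n n) + ((2*n) choose (n + 1)) = (2*n) choose n"
    using count_S[of n n 0] by (simp add: mult_2)
  have k: "(n + 1) * ((2*n) choose (n + 1)) = n * ((2*n) choose n)"
  proof (cases n)
    case 0 then show ?thesis by simp
  next
    case (Suc k)
    have a1: "Suc (Suc k) * (Suc (2*k+1) choose Suc (Suc k)) = Suc (2*k+1) * ((2*k+1) choose Suc k)"
      by (rule Suc_times_binomial)
    have a2: "Suc k * (Suc (2*k+1) choose Suc k) = Suc (2*k+1) * ((2*k+1) choose k)"
      by (rule Suc_times_binomial)
    have s3: "(2*k+1) - k = Suc k" by simp
    have a3: "((2*k+1) choose Suc k) = ((2*k+1) choose k)"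
      using binomial_symmetric[of k "2*k+1"] unfolding s3 by simp
    have e: "2 * Suc k = Suc (2*k+1)" "Suc k + 1 = Suc (Suc k)" by simp_all
    have "Suc (Suc k) * (Suc (2*k+1) choose Suc (Suc k)) = Suc k * (Suc (2*k+1) choose Suc k)"
      by (simp only: a1 a2 a3)
    then show ?thesis unfolding Suc by (simp only: e)
  qed
  have "real (n+1) * real (card (S 0 n n)) = real ((2*n) choose n)"
  proof -
    have "(n+1) * card (S 0 n n) + (n + 1) * ((2*n) choose (n + 1)) = (n+1) * ((2*n) choose n)"
      using c by (metis distrib_left)
    then have "(n+1) * card (S 0 n n) = (2*n) choose n" using k by (simp add: algebra_simps)
    then show ?thesis by (metis of_nat_mult)
  qed
  then show ?thesis unfolding eq by (simp add: field_simps)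
qed


lemma card_downclosed:
  assumes T: "T \<subseteq> {1..L}" and dc: "\<And>x y. x \<in> T \<Longrightarrow> 1 \<le> y \<Longrightarrow> y \<le> x \<Longrightarrow> y \<in> T" and j: "1 \<le> j"
  shows "j \<le> card T \<longleftrightarrow> j \<in> T"
proof
  assume jT: "j \<in> T"
  have "{1..j} \<subseteq> T" using dc[OF jT] by auto
  moreover have "finite T" using T finite_subset by blast
  ultimately have "card {1..j} \<le> card T" by (rule card_mono[rotated])
  then show "j \<le> card T" by simp
next
  assume "j \<le> card T"
  show "j \<in> T"
  proof (rule ccontr)
    assume jn: "j \<notin> T"
    have "T \<subseteq> {1..<j}"
    proof
      fix x assume "x \<in> T"
      then have "1 \<le> x" using T by auto
      moreover have "x < j" using dc[OF \<open>x \<in> T\<close> j] jn by (metis not_le_imp_less)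
      ultimately show "x \<in> {1..<j}" by simp
    qed
    then have "card T \<le> card {1..<j}" by (rule card_mono[rotated]) simp
    then show False using \<open>j \<le> card T\<close> j by simp
  qed
qed

lemma part_nth: "1 \<le> i \<Longrightarrow> i \<le> length lam \<Longrightarrow> part lam i = lam ! (i - 1)"
  by (simp add: part_def)
lemma part_out: "length lam < i \<Longrightarrow> part lam i = 0"
  by (simp add: part_def)

lemma part_mono:
  assumes p: "is_partition lam" and i: "1 \<le> i" and ij: "i \<le> j"
  shows "part lam j \<le> part lam i"
proof (cases "j \<le> length lam")
  case False then show ?thesis by (simp add: part_out)
next
  case True
  show ?thesis
  proof (cases "i = j")
    case True then show ?thesis by simp
  next
    case False
    then have "i - 1 < j - 1" using i ij by simp
    moreover have "j - 1 < length lam" using True i ij by simp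
    ultimately have "lam ! (i - 1) \<ge> lam ! (j - 1)"
      using p unfolding is_partition_def sorted_wrt_iff_nth_less by blast
    then show ?thesis using True i ij by (simp add: part_nth)
  qed
qed

lemma conj_key:
  assumes p: "is_partition lam" and i: "1 \<le> i" "i \<le> length lam"
  shows "j \<le> part lam i \<longleftrightarrow> i \<le> conjpart lam j"
proof -
  let ?T = "{k. 1 \<le> k \<and> k \<le> length lam \<and> j \<le> part lam k}"
  have "i \<le> card ?T \<longleftrightarrow> i \<in> ?T"
  proof (rule card_downclosed)
    show "?T \<subseteq> {1..length lam}" by auto
    fix x y assume "x \<in> ?T" "1 \<le> y" "y \<le> x"
    then show "y \<in> ?T" using part_mono[OF p, of y x] by auto
  qed (rule i(1))
  then show ?thesis using i unfolding conjpart_def by auto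
qed

lemma conjpart_le: "conjpart lam j \<le> length lam"
proof -
  have "conjpart lam j \<le> card {1..length lam}"
    unfolding conjpart_def by (rule card_mono) auto
  then show ?thesis by simp
qed

lemma conjpart_mono: "j \<le> j' \<Longrightarrow> conjpart lam j' \<le> conjpart lam j"
  unfolding conjpart_def by (rule card_mono) auto

lemma durfee_le: "durfee lam \<le> length lam"
  unfolding durfee_def by (rule Max.boundedI) auto

lemma durfee_iff:
  assumes p: "is_partition lam" and i: "1 \<le> i"
  shows "i \<le> durfee lam \<longleftrightarrow> i \<le> part lam i"
proof
  assume "i \<le> part lam i"
  then have "i \<le> length lam" using i by (cases "i \<le> length lam") (auto simp: part_out)
  then show "i \<le> durfee lam" unfolding durfee_def using i \<open>i \<le> part lam i\<close>
    by (intro Max_ge_iff[THEN iffD2]) auto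
next
  assume a: "i \<le> durfee lam"
  let ?D = "{0} \<union> {i. 1 \<le> i \<and> i \<le> length lam \<and> i \<le> part lam i}"
  have "durfee lam \<in> ?D" unfolding durfee_def by (rule Max_in) auto
  then obtain d where d: "d = durfee lam" "1 \<le> d" "d \<le> part lam d" using a i by auto
  then show "i \<le> part lam i" using part_mono[OF p i, of d] a by simp
qed

lemma durfee_conj:
  assumes p: "is_partition lam" and i: "1 \<le> i"
  shows "i \<le> durfee lam \<longleftrightarrow> i \<le> conjpart lam i"
proof (cases "i \<le> length lam")
  case True
  then show ?thesis using durfee_iff[OF p i] conj_key[OF p i True, of i] by simp
next
  case False
  then have "\<not> i \<le> conjpart lam i" using conjpart_le[of lam i] by simp
  moreover have "\<not> i \<le> durfee lam" using False durfee_le[of lam] by simp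
  ultimately show ?thesis by simp
qed

lemma mb_iff: "modified_balanced n lam \<longleftrightarrow> is_partition lam \<and> length lam = n \<and> part lam 1 \<le> n - 1 \<and>
   (\<forall>i. 1 \<le> i \<and> i \<le> durfee lam \<longrightarrow> part lam i < conjpart lam i)"
proof -
  have "is_partition lam \<Longrightarrow> length lam = n \<Longrightarrow> 1 \<le> i \<Longrightarrow> (i \<le> n \<and> i \<le> part lam i \<longleftrightarrow> i \<le> durfee lam)" for i
    using durfee_iff[of lam i] durfee_le[of lam] by auto
  then show ?thesis unfolding modified_balanced_def by blast
qed


definition lt2 :: "nat \<times> nat \<Rightarrow> nat \<times> nat \<Rightarrow> bool" where
  "lt2 u v \<longleftrightarrow> fst u < fst v \<and> snd u < snd v"

lemma transp_lt2: "transp lt2"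
  unfolding lt2_def transp_def by auto

lemma chain_sorted: "chain p vs \<longleftrightarrow> sorted_wrt lt2 (p # vs)"
proof (induct vs arbitrary: p)
  case Nil then show ?case by simp
next
  case (Cons v vs)
  have "sorted_wrt lt2 (p # v # vs) = (lt2 p v \<and> sorted_wrt lt2 (v # vs))"
    by (rule sorted_wrt2[OF transp_lt2])
  moreover have "chain p (v#vs) = (lt2 p v \<and> chain v vs)" by (simp add: lt2_def)
  ultimately show ?case using Cons[of v] by simp
qed

definition Vmap :: "nat list \<Rightarrow> (nat \<times> nat) list" where
  "Vmap lam = map (\<lambda>i. (frob_b lam i, frob_a lam i + 1)) (rev [1..<durfee lam + 1])"

lemma length_Vmap[simp]: "length (Vmap lam) = durfee lam"
  by (simp add: Vmap_def)

lemma rev_upt_nth: "k < l \<Longrightarrow> rev [1..<l+1] ! k = l - k"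
proof -
  assume k: "k < l"
  have "rev [1..<l+1] ! k = [1..<l+1] ! (length [1..<l+1] - Suc k)"
    by (rule rev_nth) (use k in simp)
  also have "\<dots> = 1 + (l - Suc k)"
  proof -
    have "1 + (l - Suc k) < l + 1" using k by simp
    then show ?thesis by (simp del: upt_Suc upt_Suc_append)
  qed
  finally show ?thesis using k by simp
qed

lemma Vmap_nth: "k < durfee lam \<Longrightarrow> Vmap lam ! k = (frob_b lam (durfee lam - k), frob_a lam (durfee lam - k) + 1)"
proof -
  assume k: "k < durfee lam"
  have "Vmap lam ! k = (\<lambda>i. (frob_b lam i, frob_a lam i + 1)) (rev [1..<durfee lam + 1] ! k)"
    unfolding Vmap_def by (rule nth_map) (simp add: k del: upt_Suc upt_Suc_append)
  then show ?thesis using rev_upt_nth[OF k] by simp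
qed

lemma pword_concat:
  "pword (f (Suc m)) (map f (rev [1..<Suc m]) @ rest) =
   concat (map (\<lambda>i. replicate (fst (f i) - fst (f (i+1))) N @ replicate (snd (f i) - snd (f (i+1))) E)
     (rev [1..<Suc m])) @ pword (f 1) rest"
proof (induct m)
  case 0 then show ?case by simp
next
  case (Suc m)
  have r: "rev [1..<Suc (Suc m)] = Suc m # rev [1..<Suc m]" by simp
  show ?case unfolding r using Suc by simp
qed

lemma mbp_word_Vmap: "mbp_word n lam = Wd n (Vmap lam)"
proof (cases "durfee lam")
  case 0 then show ?thesis by (simp add: mbp_word_def Wd_def Vmap_def)
next
  case (Suc m)
  define f where "f i = (frob_b lam i, frob_a lam i + 1)" for i
  have V: "Vmap lam = f (Suc m) # map f (rev [1..<Suc m])"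
    unfolding Vmap_def f_def Suc by simp
  have "Wd n (Vmap lam) = replicate (frob_b lam (Suc m)) N @ replicate (frob_a lam (Suc m) + 1) E @
      pword (f (Suc m)) (map f (rev [1..<Suc m]) @ [(n,n)])"
    unfolding Wd_def V by (simp add: f_def)
  also have "\<dots> = replicate (frob_b lam (Suc m)) N @ replicate (frob_a lam (Suc m) + 1) E @
      concat (map (\<lambda>i. replicate (fst (f i) - fst (f (i+1))) N @ replicate (snd (f i) - snd (f (i+1))) E)
     (rev [1..<Suc m])) @ pword (f 1) [(n,n)]"
    by (simp only: pword_concat)
  also have "\<dots> = mbp_word n lam"
    unfolding mbp_word_def Let_def Suc by (simp add: f_def)
  finally show ?thesis by simp
qed


lemma mb_facts:
  assumes mb: "modified_balanced n lam" and i: "1 \<le> i" "i \<le> durfee lam"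
  shows "i \<le> part lam i" "i \<le> conjpart lam i" "part lam i < conjpart lam i" "conjpart lam i \<le> n"
    "is_partition lam" "length lam = n"
proof -
  have p: "is_partition lam" and len: "length lam = n" and c: "\<forall>i. 1 \<le> i \<and> i \<le> durfee lam \<longrightarrow> part lam i < conjpart lam i"
    using mb by (auto simp: mb_iff)
  show "i \<le> part lam i" using durfee_iff[OF p i(1)] i by simp
  show "i \<le> conjpart lam i" using durfee_conj[OF p i(1)] i by simp
  show "part lam i < conjpart lam i" using c i by simp
  show "conjpart lam i \<le> n" using conjpart_le[of lam i] len by simp
  show "is_partition lam" "length lam = n" using p len by auto
qed

lemma Vmap_VL:
  assumes mb: "modified_balanced n lam"
  shows "Vmap lam \<in> VL n"
proof -
  define l where "l = durfee lam"
  have p: "is_partition lam" using mb by (simp add: mb_iff)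
  have nth: "k < l \<Longrightarrow> Vmap lam ! k = (conjpart lam (l - k) - (l - k), part lam (l - k) - (l - k) + 1)" for k
    using Vmap_nth[of k lam] unfolding l_def frob_a_def frob_b_def by simp
  have "sorted_wrt lt2 ((0,0) # Vmap lam)"
  proof (subst sorted_wrt_iff_nth_Suc_transp[OF transp_lt2], intro allI impI)
    fix k assume k: "Suc k < length ((0,0) # Vmap lam)"
    then have kl: "k < l" by (simp add: l_def)
    show "lt2 (((0,0) # Vmap lam) ! k) (((0,0) # Vmap lam) ! Suc k)"
    proof (cases k)
      case 0
      have f: "1 \<le> l" "l \<le> durfee lam" using kl l_def by auto
      have "0 < conjpart lam l - l" using mb_facts[OF mb f] by linarith
      then show ?thesis using 0 nth[of 0] kl by (simp add: lt2_def)
    next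
      case (Suc k')
      define i where "i = l - k'"
      have i1: "2 \<le> i" "i \<le> l" using kl Suc i_def by auto
      have e: "l - Suc k' = i - 1" using i_def by simp
      have f1: "1 \<le> i" "i \<le> durfee lam" using i1 l_def by auto
      have f2: "1 \<le> i - 1" "i - 1 \<le> durfee lam" using i1 l_def by auto
      have c1: "conjpart lam i \<le> conjpart lam (i - 1)" by (rule conjpart_mono) simp
      have p1: "part lam i \<le> part lam (i - 1)" by (rule part_mono[OF p f2(1)]) simp
      have "lt2 (conjpart lam i - i, part lam i - i + 1) (conjpart lam (i-1) - (i-1), part lam (i-1) - (i-1) + 1)"
        unfolding lt2_def fst_conv snd_conv using mb_facts[OF mb f1] mb_facts[OF mb f2] c1 p1 i1
        by (intro conjI; linarith)
      moreover have "((0,0) # Vmap lam) ! k = (conjpart lam i - i, part lam i - i + 1)"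
        using nth[of k'] Suc kl i_def by simp
      moreover have "((0,0) # Vmap lam) ! Suc k = (conjpart lam (i-1) - (i-1), part lam (i-1) - (i-1) + 1)"
        using nth[of "Suc k'"] Suc kl e by simp
      ultimately show ?thesis by simp
    qed
  qed
  then have ch: "chain (0,0) (Vmap lam)" by (simp add: chain_sorted)
  have "\<forall>v\<in>set (Vmap lam). snd v \<le> fst v \<and> fst v < n"
  proof
    fix v assume "v \<in> set (Vmap lam)"
    then obtain k where k: "k < l" "v = Vmap lam ! k" by (auto simp: in_set_conv_nth l_def)
    have f: "1 \<le> l - k" "l - k \<le> durfee lam" using k l_def by auto
    have v: "v = (conjpart lam (l - k) - (l - k), part lam (l - k) - (l - k) + 1)" using nth[OF k(1)] k(2) by simp
    show "snd v \<le> fst v \<and> fst v < n" unfolding v fst_conv snd_conv using mb_facts[OF mb f] f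
      by (intro conjI; linarith)
  qed
  then show ?thesis using ch by (simp add: VL_def)
qed

lemma Vmap_inj:
  assumes mb1: "modified_balanced n lam" and mb2: "modified_balanced n mu" and e: "Vmap lam = Vmap mu"
  shows "lam = mu"
proof -
  have p1: "is_partition lam" "length lam = n" and p2: "is_partition mu" "length mu = n"
    using mb1 mb2 by (auto simp: mb_iff)
  define l where "l = durfee lam"
  have dl: "durfee mu = l" using arg_cong[OF e, of length] l_def by simp
  have low: "part lam i = part mu i \<and> conjpart lam i = conjpart mu i" if i: "1 \<le> i" "i \<le> l" for i
  proof -
    have k: "l - i < l" using i by simp
    have "Vmap lam ! (l - i) = Vmap mu ! (l - i)" using e by simp
    then have "frob_b lam i = frob_b mu i \<and> frob_a lam i = frob_a mu i"
      using Vmap_nth[of "l - i" lam] Vmap_nth[of "l - i" mu] k i dl l_def by simp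
    moreover have "i \<le> part lam i" "i \<le> conjpart lam i" using mb_facts[OF mb1, of i] i l_def by auto
    moreover have "i \<le> part mu i" "i \<le> conjpart mu i" using mb_facts[OF mb2, of i] i dl by auto
    ultimately show ?thesis unfolding frob_a_def frob_b_def by auto
  qed
  have high: "part lam i \<le> part mu i"
    if pl: "is_partition lam" "length lam = n" and pm: "is_partition mu" "length mu = n"
      and dlam: "durfee lam = l" and dmu: "durfee mu = l"
      and cc: "\<And>j. 1 \<le> j \<Longrightarrow> j \<le> l \<Longrightarrow> conjpart lam j = conjpart mu j"
      and i: "l < i" "i \<le> n" for lam mu i
  proof (cases "part lam i = 0")
    case True then show ?thesis by simp
  next
    case False
    define j where "j = part lam i"
    have j1: "1 \<le> j" using False j_def by simp
    have jl: "j \<le> l"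
    proof (rule ccontr)
      assume "\<not> j \<le> l"
      then have "Suc l \<le> part lam i" using j_def by simp
      also have "part lam i \<le> part lam (Suc l)" by (rule part_mono[OF pl(1)]) (use i in auto)
      finally have "Suc l \<le> durfee lam" using durfee_iff[OF pl(1), of "Suc l"] by simp
      then show False using dlam by simp
    qed
    have i1: "1 \<le> i" using i by simp
    have "i \<le> conjpart lam j" using conj_key[OF pl(1) i1, of j] i pl(2) j_def by simp
    then have "i \<le> conjpart mu j" using cc[OF j1 jl] by simp
    then have "j \<le> part mu i" using conj_key[OF pm(1) i1, of j] i pm(2) by simp
    then show ?thesis using j_def by simp
  qed
  have "part lam i = part mu i" if i: "1 \<le> i" "i \<le> n" for i
  proof (cases "i \<le> l")
    case True then show ?thesis using low i by simp
  next
    case False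
    have cc: "\<And>j. 1 \<le> j \<Longrightarrow> j \<le> l \<Longrightarrow> conjpart lam j = conjpart mu j" using low by simp
    have "part lam i \<le> part mu i" using high[OF p1 p2 l_def[symmetric] dl cc] False i by simp
    moreover have "part mu i \<le> part lam i" using high[OF p2 p1 dl l_def[symmetric]] cc False i by simp
    ultimately show ?thesis by simp
  qed
  then show ?thesis
  proof (intro nth_equalityI)
    show "length lam = length mu" using p1 p2 by simp
    fix k assume "k < length lam" then have "part lam (Suc k) = part mu (Suc k)" using \<open>\<And>i. 1 \<le> i \<Longrightarrow> i \<le> n \<Longrightarrow> part lam i = part mu i\<close> p1 by simp
    then show "lam ! k = mu ! k" using \<open>k < length lam\<close> p1 p2 by (simp add: part_nth)
  qed
qed


lemma dec_gap:
  assumes "\<And>i j. lo \<le> i \<Longrightarrow> i < j \<Longrightarrow> j \<le> hi \<Longrightarrow> (f j :: nat) < f i"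
  shows "lo \<le> i \<Longrightarrow> i \<le> j \<Longrightarrow> j \<le> hi \<Longrightarrow> f j + (j - i) \<le> f i"
proof (induct j)
  case 0 then show ?case by simp
next
  case (Suc j)
  show ?case
  proof (cases "i = Suc j")
    case True then show ?thesis by simp
  next
    case False
    then have ij: "i \<le> j" using Suc by simp
    have "f j + (j - i) \<le> f i" using Suc ij by simp
    moreover have "f (Suc j) < f j" using assms[of j "Suc j"] Suc ij by simp
    ultimately show ?thesis using ij by simp
  qed
qed

lemma Vmap_surj:
  assumes n: "1 \<le> n" and vs: "vs \<in> VL n"
  shows "\<exists>lam. modified_balanced n lam \<and> Vmap lam = vs"
proof -
  define l where "l = length vs"
  have srt: "sorted_wrt lt2 ((0,0) # vs)" using vs by (simp add: VL_def chain_sorted)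
  have el: "\<forall>v\<in>set vs. snd v \<le> fst v \<and> fst v < n" using vs by (simp add: VL_def)
  define bb where "bb i = fst (vs ! (l - i))" for i
  define aa where "aa i = snd (vs ! (l - i)) - 1" for i
  define B where "B i = bb i + i" for i
  have srtn: "\<And>i j. i < j \<Longrightarrow> j < Suc l \<Longrightarrow> lt2 (((0,0) # vs) ! i) (((0,0) # vs) ! j)"
    using srt unfolding sorted_wrt_iff_nth_less l_def by simp
  have in_set: "1 \<le> i \<Longrightarrow> i \<le> l \<Longrightarrow> vs ! (l - i) \<in> set vs" for i by (simp add: l_def)
  have pos: "0 < fst (vs ! (l - i)) \<and> 0 < snd (vs ! (l - i))" if "1 \<le> i" "i \<le> l" for i
  proof -
    have "lt2 (((0,0) # vs) ! 0) (((0,0) # vs) ! Suc (l - i))"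
      using srtn[of 0 "Suc (l - i)"] that by simp
    then show ?thesis by (simp add: lt2_def)
  qed
  have F2: "aa i + 1 \<le> bb i" and F3: "bb i < n" and F1: "1 \<le> bb i" and snd1: "aa i + 1 = snd (vs ! (l - i))"
    if "1 \<le> i" "i \<le> l" for i
    using el in_set[OF that] pos[OF that] unfolding aa_def bb_def by auto
  have F4: "bb j < bb i \<and> aa j < aa i" if "1 \<le> i" "i < j" "j \<le> l" for i j
  proof -
    have "lt2 (((0,0) # vs) ! Suc (l - j)) (((0,0) # vs) ! Suc (l - i))"
      using srtn[of "Suc (l - j)" "Suc (l - i)"] that by simp
    then have "lt2 (vs ! (l - j)) (vs ! (l - i))" by simp
    moreover have "0 < snd (vs ! (l - j))" using pos[of j] that by simp
    ultimately show ?thesis unfolding lt2_def aa_def bb_def by auto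
  qed
  have gb: "bb j + (j - i) \<le> bb i" if "1 \<le> i" "i \<le> j" "j \<le> l" for i j
    using dec_gap[of 1 l bb] F4 that by blast
  have ga: "aa j + (j - i) \<le> aa i" if "1 \<le> i" "i \<le> j" "j \<le> l" for i j
    using dec_gap[of 1 l aa] F4 that by blast
  have Bgt: "l < B j" and Ble: "B j \<le> n" if "1 \<le> j" "j \<le> l" for j
  proof -
    have "bb l + (l - j) \<le> bb j" using gb that by simp
    moreover have "1 \<le> bb l" using F1 that by simp
    ultimately show "l < B j" unfolding B_def using that by simp
    have "bb j + (j - 1) \<le> bb 1" using gb that by simp
    moreover have "bb 1 < n" using F3 that by simp
    ultimately show "B j \<le> n" unfolding B_def using that by simp
  qed
  have Banti: "B j' \<le> B j" if "1 \<le> j" "j \<le> j'" "j' \<le> l" for j j'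
    using gb[OF that] unfolding B_def using that by simp
  have ln: "l \<le> n" using Bgt[of 1] Ble[of 1] by (cases "l = 0") auto
  define T where "T k = {j. 1 \<le> j \<and> j \<le> l \<and> k \<le> B j}" for k
  have T_sub: "T k \<subseteq> {1..l}" for k unfolding T_def by auto
  have T_card: "card (T k) \<le> l" for k using card_mono[OF _ T_sub[of k]] by simp
  have T_key: "j \<le> card (T k) \<longleftrightarrow> k \<le> B j" if "1 \<le> j" "j \<le> l" for j k
  proof -
    have "j \<le> card (T k) \<longleftrightarrow> j \<in> T k"
    proof (rule card_downclosed[OF T_sub])
      fix x y assume "x \<in> T k" "1 \<le> y" "y \<le> x"
      then show "y \<in> T k" using Banti[of y x] unfolding T_def by auto
    qed (rule that(1))
    then show ?thesis using that unfolding T_def by simp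
  qed
  define lamf where "lamf k = (if k \<le> l then aa k + k else card (T k))" for k
  define lam where "lam = map lamf [1..<n+1]"
  have len: "length lam = n" by (simp add: lam_def)
  have plam: "part lam k = lamf k" if "1 \<le> k" "k \<le> n" for k
  proof -
    have "part lam k = lam ! (k - 1)" using that len by (simp add: part_nth)
    also have "\<dots> = lamf ([1..<n+1] ! (k - 1))" unfolding lam_def by (rule nth_map) (use that in simp)
    also have "[1..<n+1] ! (k - 1) = k"
    proof -
      have "1 + (k - 1) < n + 1" using that by simp
      then have "[1..<n+1] ! (k - 1) = 1 + (k - 1)" by (rule nth_upt)
      then show ?thesis using that by simp
    qed
    finally show ?thesis .
  qed
  have lstep: "lamf (Suc m) \<le> lamf m" if "1 \<le> m" for m
  proof (cases "Suc m \<le> l")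
    case True
    then have "aa (Suc m) < aa m" using F4[of m "Suc m"] that by simp
    then show ?thesis using True by (simp add: lamf_def)
  next
    case False
    show ?thesis
    proof (cases "m = l")
      case True then show ?thesis using T_card[of "Suc m"] by (simp add: lamf_def)
    next
      case False
      then have "l < m" using \<open>\<not> Suc m \<le> l\<close> by simp
      moreover have "T (Suc m) \<subseteq> T m" unfolding T_def by auto
      ultimately show ?thesis using \<open>\<not> Suc m \<le> l\<close> card_mono[OF finite_subset[OF T_sub[of m]]]
        by (simp add: lamf_def)
    qed
  qed
  have part_lam: "is_partition lam"
    unfolding is_partition_def
  proof (subst sorted_wrt_iff_nth_Suc_transp, (simp add: transp_def; fail), intro allI impI)
    fix k assume k: "Suc k < length lam"
    have "lam ! k = lamf (Suc k)" "lam ! Suc k = lamf (Suc (Suc k))"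
      using k len unfolding lam_def by (simp_all del: upt_Suc)
    then show "lam ! k \<ge> lam ! Suc k" using lstep[of "Suc k"] by simp
  qed
  have dur: "durfee lam = l"
  proof -
    have "l \<le> durfee lam"
    proof (cases "l = 0")
      case False
      then have "l \<le> part lam l" using plam[of l] ln by (simp add: lamf_def)
      then show ?thesis using durfee_iff[OF part_lam, of l] False by simp
    qed simp
    moreover have "\<not> Suc l \<le> durfee lam"
    proof
      assume "Suc l \<le> durfee lam"
      then have a: "Suc l \<le> part lam (Suc l)" using durfee_iff[OF part_lam, of "Suc l"] by simp
      show False
      proof (cases "Suc l \<le> n")
        case True then show False using a plam[of "Suc l"] T_card[of "Suc l"] by (simp add: lamf_def)
      next
        case False then show False using a len by (simp add: part_out)
      qed
    qed
    ultimately show ?thesis by simp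
  qed
  have conj: "conjpart lam j = B j" if j: "1 \<le> j" "j \<le> l" for j
  proof -
    have "{k. 1 \<le> k \<and> k \<le> length lam \<and> j \<le> part lam k} = {1..B j}"
    proof (rule set_eqI)
      fix k
      show "k \<in> {k. 1 \<le> k \<and> k \<le> length lam \<and> j \<le> part lam k} \<longleftrightarrow> k \<in> {1..B j}"
      proof (cases "1 \<le> k \<and> k \<le> n")
        case False then show ?thesis using Ble[OF j] len by auto
      next
        case True
        have "j \<le> lamf k \<longleftrightarrow> k \<le> B j"
        proof (cases "k \<le> l")
          case True
          have "j \<le> aa k + k"
          proof (cases "k < j")
            case True then show ?thesis using ga[of k j] \<open>1 \<le> k \<and> k \<le> n\<close> j by simp
          qed simp
          moreover have "k \<le> B j" using Bgt[OF j] True by simp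
          ultimately show ?thesis using True by (simp add: lamf_def)
        next
          case False then show ?thesis using T_key[OF j, of k] by (simp add: lamf_def)
        qed
        then show ?thesis using True plam[of k] len by auto
      qed
    qed
    then show ?thesis unfolding conjpart_def by simp
  qed
  have mb: "modified_balanced n lam"
    unfolding mb_iff
  proof (intro conjI allI impI)
    show "is_partition lam" "length lam = n" by (rule part_lam, rule len)
    show "part lam 1 \<le> n - 1"
    proof (cases "l = 0")
      case True
      then have "T 1 = {}" unfolding T_def by auto
      then show ?thesis using plam[of 1] n True by (simp add: lamf_def)
    next
      case False then show ?thesis using plam[of 1] n F2[of 1] F3[of 1] by (simp add: lamf_def)
    qed
    fix i assume "1 \<le> i \<and> i \<le> durfee lam"
    then have i: "1 \<le> i" "i \<le> l" using dur by auto
    show "part lam i < conjpart lam i"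
      using plam[of i] conj[OF i] F2[OF i] i ln by (simp add: lamf_def B_def)
  qed
  have "Vmap lam = vs"
  proof (rule nth_equalityI)
    show "length (Vmap lam) = length vs" using dur l_def by simp
    fix k assume "k < length (Vmap lam)"
    then have k: "k < l" using dur by simp
    have i: "1 \<le> l - k" "l - k \<le> l" using k by auto
    have "Vmap lam ! k = (conjpart lam (l - k) - (l - k), part lam (l - k) - (l - k) + 1)"
      using Vmap_nth[of k lam] dur k unfolding frob_a_def frob_b_def by simp
    also have "\<dots> = (bb (l - k), aa (l - k) + 1)"
      using conj[OF i] plam[of "l - k"] i ln by (simp add: B_def lamf_def)
    also have "\<dots> = vs ! k" using snd1[OF i] k unfolding bb_def by simp
    finally show "Vmap lam ! k = vs ! k" .
  qed
  then show ?thesis using mb by blast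
qed


theorem mainTheorem5:
  fixes n :: nat
  assumes "n \<ge> 1"
  shows "real (card {lam. modified_balanced n lam}) = real ((2 * n) choose n) / real (n + 1)
         \<and> bij_betw (mbp_word n) {lam. modified_balanced n lam} {w. dyck_path n w}"
proof -
  have bijA: "bij_betw Vmap {lam. modified_balanced n lam} (VL n)"
  proof (rule bij_betw_imageI)
    show "inj_on Vmap {lam. modified_balanced n lam}"
      by (rule inj_onI) (use Vmap_inj in blast)
    show "Vmap ` {lam. modified_balanced n lam} = VL n"
    proof
      show "Vmap ` {lam. modified_balanced n lam} \<subseteq> VL n" using Vmap_VL by blast
      show "VL n \<subseteq> Vmap ` {lam. modified_balanced n lam}"
      proof
        fix vs assume "vs \<in> VL n"
        then obtain lam where "modified_balanced n lam" "Vmap lam = vs" using Vmap_surj assms by blast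
        then show "vs \<in> Vmap ` {lam. modified_balanced n lam}" by blast
      qed
    qed
  qed
  have "bij_betw (Wd n \<circ> Vmap) {lam. modified_balanced n lam} {w. dyck_path n w}"
    by (rule bij_betw_trans[OF bijA bij_Wd[OF assms]])
  moreover have "mbp_word n = Wd n \<circ> Vmap" by (rule ext) (simp add: mbp_word_Vmap)
  ultimately have bij: "bij_betw (mbp_word n) {lam. modified_balanced n lam} {w. dyck_path n w}" by simp
  have "card {lam. modified_balanced n lam} = card {w. dyck_path n w}"
    by (rule bij_betw_same_card[OF bij])
  then show ?thesis using bij card_dyck[of n] by simp
qed

end
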